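(* Let $(X,\varphi,G)$ be a dynamical system, $n\in\mathbb N$ and $x=(x_1,\dots,x_n)\in X^n$. If $x$ is an $n$-IN-tuple, then $x$ is an $n$-regionally proximal tuple. In particular, every $n$-IT-tuple is an $n$-regionally proximal tuple.
   Context: $G$ is an infinite countable group acting continuously (via $\varphi$) on a compact metric space $(X,d)$. For a tuple $(A_1,\dots,A_k)$ of subsets of $X$, a set $J\subseteq G$ is an independence set if for every nonempty finite $I\subseteq J$ and every $s:I\to\{1,\dots,k\}$ we have $\bigcap_{g\in I}\varphi^{g^{-1}}A_{s(g)}\neq\emptyset$. A tuple $(x_1,\dots,x_n)\in X^n$ is an $n$-IN-tuple (resp. $n$-IT-tuple) if for every product neighborhood $U_1\times\dots\times U_n$ of it, $(U_1,\dots,U_n)$ has arbitrarily large finite independence sets (resp. an infinite independence set). A tuple $(x_1,\dots,x_n)$ is $n$-regionally proximal if for every $\varepsilon>0$ there exist $x_1',\dots,x_n'\in X$ with $d(x_i,x_i')<\varepsilon$ for all $i$ and some $g\in G$ with $d(\varphi^g x_i',\varphi^g x_j')<\varepsilon$ for all $i,j$. *)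

theory Defs
  imports "HOL-Analysis.Analysis" "HOL-Algebra.Group"
begin

definition dyn_system :: "('g, 'b) monoid_scheme \<Rightarrow> ('g \<Rightarrow> 'a::metric_space \<Rightarrow> 'a) \<Rightarrow> 'a set \<Rightarrow> bool" where
  "dyn_system G \<phi> X \<longleftrightarrow>
     group G \<and> countable (carrier G) \<and> infinite (carrier G) \<and> compact X \<and>
     (\<forall>g\<in>carrier G. continuous_on X (\<phi> g) \<and> \<phi> g ` X \<subseteq> X) \<and>
     (\<forall>x\<in>X. \<phi> \<one>\<^bsub>G\<^esub> x = x) \<and>
     (\<forall>g\<in>carrier G. \<forall>h\<in>carrier G. \<forall>x\<in>X. \<phi> (g \<otimes>\<^bsub>G\<^esub> h) x = \<phi> g (\<phi> h x))"

definition indep_set :: "('g, 'b) monoid_scheme \<Rightarrow> ('g \<Rightarrow> 'a \<Rightarrow> 'a) \<Rightarrow> (nat \<Rightarrow> 'a set) \<Rightarrow> nat \<Rightarrow> 'g set \<Rightarrow> bool" where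
  "indep_set G \<phi> A k J \<longleftrightarrow> J \<subseteq> carrier G \<and>
     (\<forall>I. I \<subseteq> J \<longrightarrow> I \<noteq> {} \<longrightarrow> finite I \<longrightarrow>
        (\<forall>s. (\<forall>g\<in>I. s g < k) \<longrightarrow> (\<Inter>g\<in>I. \<phi> (inv\<^bsub>G\<^esub> g) ` A (s g)) \<noteq> {}))"

text \<open>Tuples (x_0,...,x_{n-1}) are functions nat => 'a restricted to indices < n.
Product neighbourhoods are tuples of (relatively) open subsets of X containing x_i.\<close>
definition IN_tuple :: "('g, 'b) monoid_scheme \<Rightarrow> ('g \<Rightarrow> 'a::metric_space \<Rightarrow> 'a) \<Rightarrow> 'a set \<Rightarrow> nat \<Rightarrow> (nat \<Rightarrow> 'a) \<Rightarrow> bool" where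
  "IN_tuple G \<phi> X n x \<longleftrightarrow>
     (\<forall>U. (\<forall>i<n. openin (top_of_set X) (U i) \<and> x i \<in> U i) \<longrightarrow>
        (\<forall>m. \<exists>J. finite J \<and> m \<le> card J \<and> indep_set G \<phi> U n J))"

definition IT_tuple :: "('g, 'b) monoid_scheme \<Rightarrow> ('g \<Rightarrow> 'a::metric_space \<Rightarrow> 'a) \<Rightarrow> 'a set \<Rightarrow> nat \<Rightarrow> (nat \<Rightarrow> 'a) \<Rightarrow> bool" where
  "IT_tuple G \<phi> X n x \<longleftrightarrow>
     (\<forall>U. (\<forall>i<n. openin (top_of_set X) (U i) \<and> x i \<in> U i) \<longrightarrow>
        (\<exists>J. infinite J \<and> indep_set G \<phi> U n J))"

definition regionally_proximal :: "('g, 'b) monoid_scheme \<Rightarrow> ('g \<Rightarrow> 'a::metric_space \<Rightarrow> 'a) \<Rightarrow> 'a set \<Rightarrow> nat \<Rightarrow> (nat \<Rightarrow> 'a) \<Rightarrow> bool" where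
  "regionally_proximal G \<phi> X n x \<longleftrightarrow>
     (\<forall>\<epsilon>>0. \<exists>x'. (\<forall>i<n. x' i \<in> X \<and> dist (x i) (x' i) < \<epsilon>) \<and>
        (\<exists>g\<in>carrier G. \<forall>i<n. \<forall>j<n. dist (\<phi> g (x' i)) (\<phi> g (x' j)) < \<epsilon>))"

end

theory Submission
  imports Defs
begin

lemma key:
  fixes G :: "('g, 'b) monoid_scheme" and \<phi> :: "'g \<Rightarrow> 'a::metric_space \<Rightarrow> 'a"
  assumes ds: "dyn_system G \<phi> X" and n: "0 < n" and e: "\<epsilon> > 0"
    and ind: "indep_set G \<phi> (\<lambda>i. X \<inter> ball (x i) (\<epsilon>/2)) n J"
    and g0: "g0 \<in> J" and h: "h \<in> J" and ne: "g0 \<noteq> h"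
  shows "\<exists>x'. (\<forall>i<n. x' i \<in> X \<and> dist (x i) (x' i) < \<epsilon>) \<and>
        (\<exists>g\<in>carrier G. \<forall>i<n. \<forall>j<n. dist (\<phi> g (x' i)) (\<phi> g (x' j)) < \<epsilon>)"
proof -
  let ?U = "\<lambda>i. X \<inter> ball (x i) (\<epsilon>/2)"
  have grp: "group G" using ds by (simp add: dyn_system_def)
  have Jc: "J \<subseteq> carrier G" using ind by (simp add: indep_set_def)
  have g0c: "g0 \<in> carrier G" and hc: "h \<in> carrier G" using Jc g0 h by auto
  have act: "\<And>g k z. g \<in> carrier G \<Longrightarrow> k \<in> carrier G \<Longrightarrow> z \<in> X \<Longrightarrow> \<phi> (g \<otimes>\<^bsub>G\<^esub> k) z = \<phi> g (\<phi> k z)"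
    using ds by (simp add: dyn_system_def)
  have one: "\<And>z. z \<in> X \<Longrightarrow> \<phi> \<one>\<^bsub>G\<^esub> z = z" using ds by (simp add: dyn_system_def)
  have ex: "\<exists>y. y \<in> \<phi> (inv\<^bsub>G\<^esub> g0) ` ?U i \<and> y \<in> \<phi> (inv\<^bsub>G\<^esub> h) ` ?U 0" if "i < n" for i
  proof -
    let ?s = "\<lambda>g. if g = g0 then i else (0::nat)"
    have "(\<Inter>g\<in>{g0,h}. \<phi> (inv\<^bsub>G\<^esub> g) ` ?U (?s g)) \<noteq> {}"
    proof -
      have "\<forall>I. I \<subseteq> J \<longrightarrow> I \<noteq> {} \<longrightarrow> finite I \<longrightarrow>
        (\<forall>s. (\<forall>g\<in>I. s g < n) \<longrightarrow> (\<Inter>g\<in>I. \<phi> (inv\<^bsub>G\<^esub> g) ` ?U (s g)) \<noteq> {})"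
        using ind unfolding indep_set_def by blast
      then have H: "\<And>I s. I \<subseteq> J \<Longrightarrow> I \<noteq> {} \<Longrightarrow> finite I \<Longrightarrow> (\<forall>g\<in>I. s g < n) \<Longrightarrow> (\<Inter>g\<in>I. \<phi> (inv\<^bsub>G\<^esub> g) ` ?U (s g)) \<noteq> {}"
        by blast
      have s1: "{g0,h} \<subseteq> J" using g0 h by blast
      have s2: "\<forall>g\<in>{g0,h}. ?s g < n" using that n by auto
      show ?thesis by (rule H[OF s1 _ _ s2]) auto
    qed
    then show ?thesis using ne by auto
  qed
  have "\<forall>i. \<exists>y. i < n \<longrightarrow> y \<in> \<phi> (inv\<^bsub>G\<^esub> g0) ` ?U i \<and> y \<in> \<phi> (inv\<^bsub>G\<^esub> h) ` ?U 0"
    using ex by blast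
  then obtain y where y0: "\<forall>i. i < n \<longrightarrow> y i \<in> \<phi> (inv\<^bsub>G\<^esub> g0) ` ?U i \<and> y i \<in> \<phi> (inv\<^bsub>G\<^esub> h) ` ?U 0"
    using choice[of "\<lambda>i y. i < n \<longrightarrow> y \<in> \<phi> (inv\<^bsub>G\<^esub> g0) ` ?U i \<and> y \<in> \<phi> (inv\<^bsub>G\<^esub> h) ` ?U 0"] by blast
  have "\<forall>i. \<exists>u. i < n \<longrightarrow> u \<in> ?U i \<and> y i = \<phi> (inv\<^bsub>G\<^esub> g0) u"
    using y0 by blast
  then obtain u where u0: "\<forall>i. i < n \<longrightarrow> u i \<in> ?U i \<and> y i = \<phi> (inv\<^bsub>G\<^esub> g0) (u i)"
    using choice[of "\<lambda>i u. i < n \<longrightarrow> u \<in> ?U i \<and> y i = \<phi> (inv\<^bsub>G\<^esub> g0) u"] by blast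
  have "\<forall>i. \<exists>v. i < n \<longrightarrow> v \<in> ?U 0 \<and> y i = \<phi> (inv\<^bsub>G\<^esub> h) v"
    using y0 by blast
  then obtain v where v0: "\<forall>i. i < n \<longrightarrow> v i \<in> ?U 0 \<and> y i = \<phi> (inv\<^bsub>G\<^esub> h) (v i)"
    using choice[of "\<lambda>i v. i < n \<longrightarrow> v \<in> ?U 0 \<and> y i = \<phi> (inv\<^bsub>G\<^esub> h) v"] by blast
  have u: "\<And>i. i < n \<Longrightarrow> u i \<in> ?U i \<and> y i = \<phi> (inv\<^bsub>G\<^esub> g0) (u i)" using u0 by blast
  have v: "\<And>i. i < n \<Longrightarrow> v i \<in> ?U 0 \<and> y i = \<phi> (inv\<^bsub>G\<^esub> h) (v i)" using v0 by blast
  have ig0: "inv\<^bsub>G\<^esub> g0 \<in> carrier G" and ih: "inv\<^bsub>G\<^esub> h \<in> carrier G"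
    using grp g0c hc by (auto intro: group.inv_closed)
  have img: "\<phi> (h \<otimes>\<^bsub>G\<^esub> inv\<^bsub>G\<^esub> g0) (u i) = v i" if "i < n" for i
  proof -
    have "\<phi> (h \<otimes>\<^bsub>G\<^esub> inv\<^bsub>G\<^esub> g0) (u i) = \<phi> h (y i)"
      using act[OF hc ig0] u[OF that] by auto
    also have "\<dots> = \<phi> (h \<otimes>\<^bsub>G\<^esub> inv\<^bsub>G\<^esub> h) (v i)"
      using act[OF hc ih] v[OF that] by auto
    also have "\<dots> = v i" using one v[OF that] grp hc by (simp add: group.r_inv)
    finally show ?thesis .
  qed
  show ?thesis
  proof (intro exI conjI allI impI bexI)
    fix i assume i: "i < n"
    then show "u i \<in> X" using u by auto
    have "dist (x i) (u i) < \<epsilon>/2" using u[OF i] by auto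
    then show "dist (x i) (u i) < \<epsilon>" using e by linarith
  next
    show "h \<otimes>\<^bsub>G\<^esub> inv\<^bsub>G\<^esub> g0 \<in> carrier G" using grp hc ig0 by (simp add: group.subgroupE(4) monoid.m_closed group.is_monoid)
  next
    fix i j assume ij: "i < n" "j < n"
    have "dist (v i) (v j) \<le> dist (v i) (x 0) + dist (x 0) (v j)" by (rule dist_triangle)
    also have "\<dots> < \<epsilon>" using v[OF ij(1)] v[OF ij(2)] by (simp add: dist_commute)
    finally show "dist (\<phi> (h \<otimes>\<^bsub>G\<^esub> inv\<^bsub>G\<^esub> g0) (u i)) (\<phi> (h \<otimes>\<^bsub>G\<^esub> inv\<^bsub>G\<^esub> g0) (u j)) < \<epsilon>"
      using img ij by simp
  qed
qed

lemma two_elems: "finite J \<Longrightarrow> 2 \<le> card J \<Longrightarrow> \<exists>a\<in>J. \<exists>b\<in>J. a \<noteq> b"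
proof (rule ccontr)
  assume f: "finite J" and c: "2 \<le> card J" and n: "\<not> (\<exists>a\<in>J. \<exists>b\<in>J. a \<noteq> b)"
  then have "card J \<le> Suc 0" using card_le_Suc0_iff_eq[OF f] by blast
  then show False using c by simp
qed

lemma two_elems_inf: "infinite J \<Longrightarrow> \<exists>a\<in>J. \<exists>b\<in>J. a \<noteq> b"
proof -
  assume "infinite J"
  then obtain a where a: "a \<in> J" by (metis ex_in_conv finite.emptyI)
  have "infinite (J - {a})" using \<open>infinite J\<close> by simp
  then obtain b where "b \<in> J - {a}" by (metis ex_in_conv finite.emptyI)
  then show ?thesis using a by blast
qed

theorem proposition2p6:
  fixes G :: "('g, 'b) monoid_scheme" and \<phi> :: "'g \<Rightarrow> 'a::metric_space \<Rightarrow> 'a"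
    and X :: "'a set" and n :: nat and x :: "nat \<Rightarrow> 'a"
  assumes "dyn_system G \<phi> X"
    and "\<forall>i<n. x i \<in> X"
  shows "(IN_tuple G \<phi> X n x \<longrightarrow> regionally_proximal G \<phi> X n x) \<and>
         (IT_tuple G \<phi> X n x \<longrightarrow> regionally_proximal G \<phi> X n x)"
proof -
  have grp: "group G" using assms(1) by (simp add: dyn_system_def)
  have n0: "regionally_proximal G \<phi> X n x" if "n = 0"
    unfolding regionally_proximal_def using that grp by (auto intro: monoid.one_closed group.is_monoid)
  have nbhd: "\<forall>i<n. openin (top_of_set X) (X \<inter> ball (x i) (\<epsilon>/2)) \<and> x i \<in> X \<inter> ball (x i) (\<epsilon>/2)"
    if "\<epsilon> > 0" for \<epsilon>
    using assms(2) that by (auto intro: openin_open_Int)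
  have A: "regionally_proximal G \<phi> X n x" if inT: "IN_tuple G \<phi> X n x"
  proof (cases "n = 0")
    case True then show ?thesis using n0 by simp
  next
    case False
    show ?thesis unfolding regionally_proximal_def
    proof (intro allI impI)
      fix \<epsilon> :: real assume e: "\<epsilon> > 0"
      obtain J where J: "finite J" "2 \<le> card J" "indep_set G \<phi> (\<lambda>i. X \<inter> ball (x i) (\<epsilon>/2)) n J"
      proof -
        have "\<forall>m. \<exists>J. finite J \<and> m \<le> card J \<and> indep_set G \<phi> (\<lambda>i. X \<inter> ball (x i) (\<epsilon>/2)) n J"
          using mp[OF spec[OF inT[unfolded IN_tuple_def], of "\<lambda>i. X \<inter> ball (x i) (\<epsilon>/2)"] nbhd[OF e]] .
        then have "\<exists>J. finite J \<and> 2 \<le> card J \<and> indep_set G \<phi> (\<lambda>i. X \<inter> ball (x i) (\<epsilon>/2)) n J"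
          by (rule spec)
        then show ?thesis using that by blast
      qed
      then obtain a b where "a \<in> J" "b \<in> J" "a \<noteq> b" using two_elems[OF J(1) J(2)] by blast
      then show "\<exists>x'. (\<forall>i<n. x' i \<in> X \<and> dist (x i) (x' i) < \<epsilon>) \<and>
        (\<exists>g\<in>carrier G. \<forall>i<n. \<forall>j<n. dist (\<phi> g (x' i)) (\<phi> g (x' j)) < \<epsilon>)"
        using key[OF assms(1) _ e J(3)] False by blast
    qed
  qed
  have B: "regionally_proximal G \<phi> X n x" if inT: "IT_tuple G \<phi> X n x"
  proof (cases "n = 0")
    case True then show ?thesis using n0 by simp
  next
    case False
    show ?thesis unfolding regionally_proximal_def
    proof (intro allI impI)
      fix \<epsilon> :: real assume e: "\<epsilon> > 0"
      obtain J where J: "infinite J" "indep_set G \<phi> (\<lambda>i. X \<inter> ball (x i) (\<epsilon>/2)) n J"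
      proof -
        have "\<exists>J. infinite J \<and> indep_set G \<phi> (\<lambda>i. X \<inter> ball (x i) (\<epsilon>/2)) n J"
          using mp[OF spec[OF inT[unfolded IT_tuple_def], of "\<lambda>i. X \<inter> ball (x i) (\<epsilon>/2)"] nbhd[OF e]] .
        then show ?thesis using that by blast
      qed
      then obtain a b where "a \<in> J" "b \<in> J" "a \<noteq> b" using two_elems_inf by blast
      then show "\<exists>x'. (\<forall>i<n. x' i \<in> X \<and> dist (x i) (x' i) < \<epsilon>) \<and>
        (\<exists>g\<in>carrier G. \<forall>i<n. \<forall>j<n. dist (\<phi> g (x' i)) (\<phi> g (x' j)) < \<epsilon>)"
        using key[OF assms(1) _ e J(2)] False by blast
    qed
  qed
  show ?thesis using A B by blast
qed

end
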